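(* Let $A=[\mathbf a_1,\dots,\mathbf a_M]\in\mathbb{R}_+^{K\times M}$ with column sums $\mathbf 1^\top\mathbf a_y>0$ for all $y$, let $\boldsymbol\beta\in\mathbb{R}_+^K$ with $b:=\mathbf 1^\top\boldsymbol\beta>0$, assume $\{\mathbf w\ge\mathbf 0:A\mathbf w=\boldsymbol\beta\}\neq\emptyset$, and let $D=\mathrm{diag}(1,\dots,M)$. Define \[\theta^*_{\max}=\max_{\mathbf w\ge\mathbf 0,\,A\mathbf w=\boldsymbol\beta}\mathbf 1^\top AD\mathbf w,\quad\tilde\theta_{\max}=\max_{\mathbf w\ge\mathbf 0,\,\mathbf 1^\top A\mathbf w=b}\mathbf 1^\top AD\mathbf w,\] \[\theta^*_{\min}=\min_{\mathbf w\ge\mathbf 0,\,A\mathbf w=\boldsymbol\beta}\mathbf 1^\top AD\mathbf w,\quad\tilde\theta_{\min}=\min_{\mathbf w\ge\mathbf 0,\,\mathbf 1^\top A\mathbf w=b}\mathbf 1^\top AD\mathbf w.\] Then \[\tilde\theta_{\max}-\theta^*_{\max}\ge\frac b2\Big\|\frac{\boldsymbol\beta}{\mathbf 1^\top\boldsymbol\beta}-\frac{\mathbf a_M}{\mathbf 1^\top\mathbf a_M}\Big\|_1,\qquad\theta^*_{\min}-\tilde\theta_{\min}\ge\frac b2\Big\|\frac{\boldsymbol\beta}{\mathbf 1^\top\boldsymbol\beta}-\frac{\mathbf a_1}{\mathbf 1^\top\mathbf a_1}\Big\|_1.\] *)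

theory Defs
  imports "HOL-Analysis.Analysis"
begin

text \<open>Matrices A in R_+^{K x M} are represented as functions nat => nat => real,
  rows indexed by {1..K}, columns by {1..M}; vectors w in R^M as functions
  nat => real supported on {1..M}.\<close>

definition col_sum :: "nat \<Rightarrow> (nat \<Rightarrow> nat \<Rightarrow> real) \<Rightarrow> nat \<Rightarrow> real" where
  "col_sum K A y = (\<Sum>k=1..K. A k y)"

definition mat_vec :: "nat \<Rightarrow> (nat \<Rightarrow> nat \<Rightarrow> real) \<Rightarrow> (nat \<Rightarrow> real) \<Rightarrow> nat \<Rightarrow> real" where
  "mat_vec M A w k = (\<Sum>y=1..M. A k y * w y)"

definition objective :: "nat \<Rightarrow> nat \<Rightarrow> (nat \<Rightarrow> nat \<Rightarrow> real) \<Rightarrow> (nat \<Rightarrow> real) \<Rightarrow> real" where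
  "objective K M A w = (\<Sum>k=1..K. \<Sum>y=1..M. A k y * real y * w y)"

definition nonneg_vec :: "nat \<Rightarrow> (nat \<Rightarrow> real) set" where
  "nonneg_vec M = {w. (\<forall>y\<in>{1..M}. w y \<ge> 0) \<and> (\<forall>y. y \<notin> {1..M} \<longrightarrow> w y = 0)}"

definition feas_exact :: "nat \<Rightarrow> nat \<Rightarrow> (nat \<Rightarrow> nat \<Rightarrow> real) \<Rightarrow> (nat \<Rightarrow> real) \<Rightarrow> (nat \<Rightarrow> real) set" where
  "feas_exact K M A \<beta> = {w \<in> nonneg_vec M. \<forall>k\<in>{1..K}. mat_vec M A w k = \<beta> k}"

definition feas_relaxed :: "nat \<Rightarrow> nat \<Rightarrow> (nat \<Rightarrow> nat \<Rightarrow> real) \<Rightarrow> real \<Rightarrow> (nat \<Rightarrow> real) set" where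
  "feas_relaxed K M A b = {w \<in> nonneg_vec M. (\<Sum>k=1..K. mat_vec M A w k) = b}"

end

theory Submission
  imports Defs
begin

lemma obj_eq: "objective K M A w = (\<Sum>y=1..M. real y * col_sum K A y * w y)"
  unfolding objective_def col_sum_def
  by (subst sum.swap) (simp add: sum_distrib_left mult_ac)

lemma relsum_eq: "(\<Sum>k=1..K. mat_vec M A w k) = (\<Sum>y=1..M. col_sum K A y * w y)"
  unfolding mat_vec_def col_sum_def
  by (subst sum.swap) (simp add: sum_distrib_left mult_ac)

lemma key:
  fixes K M :: nat and A :: "nat \<Rightarrow> nat \<Rightarrow> real" and \<beta> :: "nat \<Rightarrow> real" and b :: real
  assumes A_nonneg: "\<forall>k\<in>{1..K}. \<forall>y\<in>{1..M}. A k y \<ge> 0"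
    and col_pos: "\<forall>y\<in>{1..M}. col_sum K A y > 0"
    and b_def: "b = (\<Sum>k=1..K. \<beta> k)"
    and b_pos: "b > 0"
    and w: "w \<in> feas_exact K M A \<beta>"
    and m: "m \<in> {1..M}"
  shows "b * (\<Sum>k=1..K. \<bar>\<beta> k / b - A k m / col_sum K A m\<bar>)
     \<le> 2 * (\<Sum>y=1..M. if y = m then 0 else col_sum K A y * w y)"
proof -
  define c where "c = col_sum K A"
  have w0: "\<forall>y\<in>{1..M}. w y \<ge> 0" and eq: "\<forall>k\<in>{1..K}. (\<Sum>y=1..M. A k y * w y) = \<beta> k"
    using w unfolding feas_exact_def nonneg_vec_def mat_vec_def by auto
  have "b = (\<Sum>k=1..K. mat_vec M A w k)" using eq b_def unfolding mat_vec_def by simp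
  hence bsum: "b = (\<Sum>y=1..M. c y * w y)" using relsum_eq c_def by simp
  have cm: "c m > 0" using col_pos m c_def by auto
  have each: "b * \<bar>\<beta> k / b - A k m / c m\<bar> \<le> (\<Sum>y=1..M. w y * \<bar>A k y - c y * A k m / c m\<bar>)"
    if k: "k \<in> {1..K}" for k
  proof -
    have e: "\<beta> k - b * A k m / c m = b * (\<beta> k / b - A k m / c m)"
      using b_pos by (simp add: field_simps)
    have "b * \<bar>\<beta> k / b - A k m / c m\<bar> = \<bar>\<beta> k - b * A k m / c m\<bar>"
      unfolding e using b_pos by (simp add: abs_mult)
    also have "\<beta> k - b * A k m / c m = (\<Sum>y=1..M. w y * (A k y - c y * A k m / c m))"
      using eq k bsum by (simp add: sum_subtractf sum_distrib_left sum_distrib_right sum_divide_distrib algebra_simps)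
    also have "\<bar>\<dots>\<bar> \<le> (\<Sum>y=1..M. \<bar>w y * (A k y - c y * A k m / c m)\<bar>)" by (rule sum_abs)
    also have "\<dots> = (\<Sum>y=1..M. w y * \<bar>A k y - c y * A k m / c m\<bar>)"
      using w0 by (intro sum.cong) (auto simp: abs_mult)
    finally show ?thesis .
  qed
  have "b * (\<Sum>k=1..K. \<bar>\<beta> k / b - A k m / c m\<bar>) = (\<Sum>k=1..K. b * \<bar>\<beta> k / b - A k m / c m\<bar>)"
    by (simp add: sum_distrib_left)
  also have "\<dots> \<le> (\<Sum>k=1..K. \<Sum>y=1..M. w y * \<bar>A k y - c y * A k m / c m\<bar>)"
    using each by (intro sum_mono) auto
  also have "\<dots> = (\<Sum>y=1..M. w y * (\<Sum>k=1..K. \<bar>A k y - c y * A k m / c m\<bar>))"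
    by (subst sum.swap) (simp add: sum_distrib_left)
  also have "\<dots> \<le> (\<Sum>y=1..M. 2 * (if y = m then 0 else c y * w y))"
  proof (intro sum_mono)
    fix y assume y: "y \<in> {1..M}"
    show "w y * (\<Sum>k=1..K. \<bar>A k y - c y * A k m / c m\<bar>) \<le> 2 * (if y = m then 0 else c y * w y)"
    proof (cases "y = m")
      case True then show ?thesis using cm by simp
    next
      case False
      have "(\<Sum>k=1..K. \<bar>A k y - c y * A k m / c m\<bar>) \<le> (\<Sum>k=1..K. A k y + c y * A k m / c m)"
      proof (intro sum_mono)
        fix k assume k: "k \<in> {1..K}"
        have "A k y \<ge> 0" "A k m \<ge> 0" using A_nonneg k y m by auto
        moreover have "c y > 0" using col_pos y c_def by auto
        ultimately show "\<bar>A k y - c y * A k m / c m\<bar> \<le> A k y + c y * A k m / c m"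
          using cm by (simp add: abs_le_iff)
      qed
      also have "\<dots> = c y + c y * c m / c m"
        unfolding c_def col_sum_def by (simp add: sum.distrib sum_distrib_left sum_divide_distrib)
      also have "\<dots> = 2 * c y" using cm by simp
      finally have "w y * (\<Sum>k=1..K. \<bar>A k y - c y * A k m / c m\<bar>) \<le> w y * (2 * c y)"
        using w0 y by (intro mult_left_mono) auto
      then show ?thesis using False by (simp add: mult_ac)
    qed
  qed
  also have "\<dots> = 2 * (\<Sum>y=1..M. if y = m then 0 else c y * w y)"
    by (simp add: sum_distrib_left)
  finally show ?thesis unfolding c_def .
qed

theorem lemma2:
  fixes K M :: nat and A :: "nat \<Rightarrow> nat \<Rightarrow> real" and \<beta> :: "nat \<Rightarrow> real" and b :: real
  assumes A_nonneg: "\<forall>k\<in>{1..K}. \<forall>y\<in>{1..M}. A k y \<ge> 0"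
    and col_pos: "\<forall>y\<in>{1..M}. col_sum K A y > 0"
    and beta_nonneg: "\<forall>k\<in>{1..K}. \<beta> k \<ge> 0"
    and b_def: "b = (\<Sum>k=1..K. \<beta> k)"
    and b_pos: "b > 0"
    and feasible: "feas_exact K M A \<beta> \<noteq> {}"
  shows "Sup (objective K M A ` feas_relaxed K M A b) - Sup (objective K M A ` feas_exact K M A \<beta>)
           \<ge> b / 2 * (\<Sum>k=1..K. \<bar>\<beta> k / b - A k M / col_sum K A M\<bar>)
       \<and> Inf (objective K M A ` feas_exact K M A \<beta>) - Inf (objective K M A ` feas_relaxed K M A b)
           \<ge> b / 2 * (\<Sum>k=1..K. \<bar>\<beta> k / b - A k 1 / col_sum K A 1\<bar>)"
proof -
  define c where "c = col_sum K A"
  define S1 where "S1 = (\<Sum>k=1..K. \<bar>\<beta> k / b - A k 1 / c 1\<bar>)"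
  define SM where "SM = (\<Sum>k=1..K. \<bar>\<beta> k / b - A k M / c M\<bar>)"
  obtain w0 where w0: "w0 \<in> feas_exact K M A \<beta>" using feasible by auto
  have M1: "M \<ge> 1"
  proof (rule ccontr)
    assume "\<not> M \<ge> 1" hence "M = 0" by simp
    hence "\<forall>k\<in>{1..K}. \<beta> k = 0" using w0 unfolding feas_exact_def mat_vec_def by auto
    hence "b = 0" using b_def by simp
    thus False using b_pos by simp
  qed
  have cpos: "\<And>y. y \<in> {1..M} \<Longrightarrow> c y > 0" using col_pos c_def by auto
  have ex_b: "(\<Sum>y=1..M. c y * w y) = b" and ex_nn: "\<forall>y\<in>{1..M}. w y \<ge> 0"
    if "w \<in> feas_exact K M A \<beta>" for w
  proof -
    have "b = (\<Sum>k=1..K. mat_vec M A w k)" using that b_def unfolding feas_exact_def by simp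
    thus "(\<Sum>y=1..M. c y * w y) = b" using relsum_eq c_def by simp
    show "\<forall>y\<in>{1..M}. w y \<ge> 0" using that unfolding feas_exact_def nonneg_vec_def by auto
  qed
  have rel_b: "(\<Sum>y=1..M. c y * w y) = b" and rel_nn: "\<forall>y\<in>{1..M}. w y \<ge> 0"
    if "w \<in> feas_relaxed K M A b" for w
  proof -
    have "b = (\<Sum>k=1..K. mat_vec M A w k)" using that unfolding feas_relaxed_def by simp
    thus "(\<Sum>y=1..M. c y * w y) = b" using relsum_eq c_def by simp
    show "\<forall>y\<in>{1..M}. w y \<ge> 0" using that unfolding feas_relaxed_def nonneg_vec_def by auto
  qed
  have objc: "objective K M A w = (\<Sum>y=1..M. real y * (c y * w y))" for w
    using obj_eq[of K M A w] c_def by (simp add: mult_ac)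
  have rel_up: "objective K M A w \<le> real M * b" if "w \<in> feas_relaxed K M A b" for w
  proof -
    have "objective K M A w \<le> (\<Sum>y=1..M. real M * (c y * w y))"
      unfolding objc using rel_nn[OF that] cpos
    proof (intro sum_mono mult_right_mono)
      fix y assume y: "y \<in> {1..M}"
      show "real y \<le> real M" using y by auto
      show "0 \<le> c y * w y" using cpos[OF y] rel_nn[OF that] y by simp
    qed
    also have "\<dots> = real M * b" using rel_b[OF that] by (metis sum_distrib_left)
    finally show ?thesis .
  qed
  have rel_lo: "objective K M A w \<ge> b" if "w \<in> feas_relaxed K M A b \<union> feas_exact K M A \<beta>" for w
  proof -
    have b': "(\<Sum>y=1..M. c y * w y) = b" and nn: "\<forall>y\<in>{1..M}. w y \<ge> 0"
      using that rel_b rel_nn ex_b ex_nn by blast+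
    have "b = (\<Sum>y=1..M. 1 * (c y * w y))" using b' by simp
    also have "\<dots> \<le> objective K M A w"
      unfolding objc
    proof (intro sum_mono mult_right_mono)
      fix y assume y: "y \<in> {1..M}"
      show "1 \<le> real y" using y by auto
      show "0 \<le> c y * w y" using cpos[OF y] nn y by simp
    qed
    finally show ?thesis .
  qed
  define wM where "wM = (\<lambda>y::nat. if y = M then b / c M else 0)"
  define w1 where "w1 = (\<lambda>y::nat. if y = 1 then b / c 1 else 0)"
  have cM: "c M > 0" "c 1 > 0" using cpos M1 by auto
  have wM_in: "wM \<in> feas_relaxed K M A b"
    unfolding feas_relaxed_def nonneg_vec_def relsum_eq
    using M1 cM b_pos by (auto simp: wM_def c_def[symmetric] if_distrib sum.delta cong: if_cong)
  have w1_in: "w1 \<in> feas_relaxed K M A b"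
    unfolding feas_relaxed_def nonneg_vec_def relsum_eq
    using M1 cM b_pos by (auto simp: w1_def c_def[symmetric] if_distrib sum.delta cong: if_cong)
  have objwM: "objective K M A wM = real M * b"
    unfolding objc using M1 cM by (simp add: wM_def if_distrib sum.delta cong: if_cong)
  have objw1: "objective K M A w1 = b"
    unfolding objc using M1 cM by (simp add: w1_def if_distrib sum.delta cong: if_cong)
  have SupR: "Sup (objective K M A ` feas_relaxed K M A b) \<ge> real M * b"
    using objwM wM_in rel_up
    by (metis bdd_aboveI2 cSup_upper image_eqI)
  have InfR: "Inf (objective K M A ` feas_relaxed K M A b) \<le> b"
  proof -
    have "bdd_below (objective K M A ` feas_relaxed K M A b)"
      using rel_lo by (intro bdd_belowI2[where m=b]) auto
    thus ?thesis using objw1 w1_in by (metis cInf_lower image_eqI)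
  qed
  have ex_up: "objective K M A w \<le> real M * b - b / 2 * SM" if w: "w \<in> feas_exact K M A \<beta>" for w
  proof -
    have k: "b * SM \<le> 2 * (\<Sum>y=1..M. if y = M then 0 else c y * w y)"
      using key[OF A_nonneg col_pos b_def b_pos w, of M] M1 unfolding SM_def c_def by auto
    have "(\<Sum>y=1..M. if y = M then 0 else c y * w y) \<le> (\<Sum>y=1..M. (real M - real y) * (c y * w y))"
    proof (intro sum_mono)
      fix y assume y: "y \<in> {1..M}"
      have p: "c y * w y \<ge> 0" using cpos[OF y] ex_nn[OF w] y by simp
      show "(if y = M then 0 else c y * w y) \<le> (real M - real y) * (c y * w y)"
      proof (cases "y = M")
        case False
        hence "real M - real y \<ge> 1" using y by auto
        thus ?thesis using False p mult_right_mono[OF \<open>real M - real y \<ge> 1\<close> p] by simp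
      qed (simp)
    qed
    also have "\<dots> = real M * b - objective K M A w"
      unfolding objc ex_b[OF w, symmetric]
      by (simp add: left_diff_distrib sum_subtractf sum_distrib_left)
    finally show ?thesis using k by simp
  qed
  have ex_lo: "objective K M A w \<ge> b + b / 2 * S1" if w: "w \<in> feas_exact K M A \<beta>" for w
  proof -
    have k: "b * S1 \<le> 2 * (\<Sum>y=1..M. if y = 1 then 0 else c y * w y)"
      using key[OF A_nonneg col_pos b_def b_pos w, of 1] M1 unfolding S1_def c_def by auto
    have "(\<Sum>y=1..M. if y = 1 then 0 else c y * w y) \<le> (\<Sum>y=1..M. (real y - 1) * (c y * w y))"
    proof (intro sum_mono)
      fix y assume y: "y \<in> {1..M}"
      have p: "c y * w y \<ge> 0" using cpos[OF y] ex_nn[OF w] y by simp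
      show "(if y = 1 then 0 else c y * w y) \<le> (real y - 1) * (c y * w y)"
      proof (cases "y = 1")
        case False
        hence "real y - 1 \<ge> 1" using y by auto
        thus ?thesis using False p mult_right_mono[OF \<open>real y - 1 \<ge> 1\<close> p] by simp
      qed (simp)
    qed
    also have "\<dots> = objective K M A w - b"
      unfolding objc ex_b[OF w, symmetric]
      by (simp add: left_diff_distrib sum_subtractf sum_distrib_left)
    finally show ?thesis using k by simp
  qed
  have SupE: "Sup (objective K M A ` feas_exact K M A \<beta>) \<le> real M * b - b / 2 * SM"
    using feasible ex_up by (intro cSup_least) auto
  have InfE: "Inf (objective K M A ` feas_exact K M A \<beta>) \<ge> b + b / 2 * S1"
    using feasible ex_lo by (intro cInf_greatest) auto
  show ?thesis using SupR InfR SupE InfE unfolding S1_def SM_def c_def by linarith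
qed

end
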